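(* Assume $I_1\in L^1(\mu_V)$ and that $I_1,I_2$ are locally bounded. Suppose there exist $\phi\in\hat{\mathscr C}_{j,V}$ with $\phi\ge1$, $h\in C^\infty(\mathbb R^d)$ with $h>0$, and constants $b,r_0>0$ such that for all $x$, $$\hat L_{j,V}\phi(x)\le -h(x)+b\mathbf 1_{B(0,r_0)}(x).$$ If $\int\phi h^{-1}d\mu_V<\infty$ and $\kappa_r<\infty$ for every $r>1$, then there exists $C_1>0$ such that for all $f\in C_b^\infty(\mathbb R^d)$ with $\int f\,d\mu_V=0$, $$\int f^2h\phi^{-1}\,d\mu_V\le C_1D_{j,V}(f,f).$$
   Context: Let $d\ge1$; $V$ locally bounded measurable with $\int e^{-V}<\infty$, $\mu_V(dx)=e^{-V(x)}dx/\int e^{-V}$. $j\ge0$ is measurable and symmetric on $\{(x,y):x\ne y\}$. $I_1(x):=\int(1\wedge|x-y|^2)j(x,y)\mu_V(dy)$, $I_2(x):=\int_{\{|z|\le1\}}|z|\,|j(x,x+z)e^{-V(x+z)}-j(x,x-z)e^{-V(x-z)}|dz$. $D_{j,V}(f,f):=\frac12\iint(f(y)-f(x))^2j(x,y)\mu_V(dy)\mu_V(dx)$. Truncated operator: $\hat L_{j,V}f(x):=\int_{\{|x-y|>1\}}(f(y)-f(x))j(x,y)\mu_V(dy)$. $\hat{\mathscr C}_{j,V}$ is the set of $\phi\in C^\infty(\mathbb R^d)$ such that $x\mapsto\int_{\{|x-y|>1\}}|\phi(y)|j(x,y)\mu_V(dy)$ is locally bounded. $\kappa_r:=\mu_V(B(0,r))^{-2}\sup_{x\in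 B(0,r)}\int_{B(0,r)}j(x,y)^{-1}\mu_V(dy)$. *)

theory Defs
  imports "HOL-Analysis.Analysis" "HOL-Probability.Probability"
begin

fun Ck :: "nat \<Rightarrow> ('a::euclidean_space \<Rightarrow> real) set" where
  "Ck 0 = {f. continuous_on UNIV f}"
| "Ck (Suc k) = {f. f differentiable_on UNIV \<and>
      (\<forall>i\<in>Basis. (\<lambda>x. frechet_derivative f (at x) i) \<in> Ck k)}"

definition smooth :: "('a::euclidean_space \<Rightarrow> real) \<Rightarrow> bool" where
  "smooth f \<longleftrightarrow> (\<forall>k. f \<in> Ck k)"

fun Cbk :: "nat \<Rightarrow> ('a::euclidean_space \<Rightarrow> real) set" where
  "Cbk 0 = {f. continuous_on UNIV f \<and> bounded (range f)}"
| "Cbk (Suc k) = {f. bounded (range f) \<and> f differentiable_on UNIV \<and>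
      (\<forall>i\<in>Basis. (\<lambda>x. frechet_derivative f (at x) i) \<in> Cbk k)}"

definition smooth_bdd :: "('a::euclidean_space \<Rightarrow> real) \<Rightarrow> bool" where
  "smooth_bdd f \<longleftrightarrow> (\<forall>k. f \<in> Cbk k)"

definition locbdd_real :: "('a::euclidean_space \<Rightarrow> real) \<Rightarrow> bool" where
  "locbdd_real g \<longleftrightarrow> (\<forall>K. compact K \<longrightarrow> bounded (g ` K))"

definition locbdd_ennreal :: "('a::euclidean_space \<Rightarrow> ennreal) \<Rightarrow> bool" where
  "locbdd_ennreal g \<longleftrightarrow> (\<forall>K. compact K \<longrightarrow> (\<exists>C::real. \<forall>x\<in>K. g x \<le> ennreal C))"

definition muV :: "('a::euclidean_space \<Rightarrow> real) \<Rightarrow> 'a measure" where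
  "muV V = density lborel
     (\<lambda>x. ennreal (exp (- V x) / (LINT y|lborel. exp (- V y))))"

definition I1 :: "('a::euclidean_space \<Rightarrow> real) \<Rightarrow> ('a \<Rightarrow> 'a \<Rightarrow> real) \<Rightarrow> 'a \<Rightarrow> ennreal" where
  "I1 V j x = (\<integral>\<^sup>+ y. ennreal (min 1 ((norm (x - y))\<^sup>2) * j x y) \<partial>muV V)"

definition I2 :: "('a::euclidean_space \<Rightarrow> real) \<Rightarrow> ('a \<Rightarrow> 'a \<Rightarrow> real) \<Rightarrow> 'a \<Rightarrow> ennreal" where
  "I2 V j x = (\<integral>\<^sup>+ z. indicator (cball 0 1) z *
      ennreal (norm z * \<bar>j x (x + z) * exp (- V (x + z)) - j x (x - z) * exp (- V (x - z))\<bar>)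
      \<partial>lborel)"

definition Dform :: "('a::euclidean_space \<Rightarrow> real) \<Rightarrow> ('a \<Rightarrow> 'a \<Rightarrow> real) \<Rightarrow> ('a \<Rightarrow> real) \<Rightarrow> ennreal" where
  "Dform V j f = (1/2) * (\<integral>\<^sup>+ x. (\<integral>\<^sup>+ y. ennreal ((f y - f x)\<^sup>2 * j x y) \<partial>muV V) \<partial>muV V)"

text \<open>Truncated operator (Bochner integral; the integrand is integrable for phi in hat C).\<close>
definition Lhat :: "('a::euclidean_space \<Rightarrow> real) \<Rightarrow> ('a \<Rightarrow> 'a \<Rightarrow> real) \<Rightarrow> ('a \<Rightarrow> real) \<Rightarrow> 'a \<Rightarrow> real" where
  "Lhat V j f x = (LINT y|muV V. indicator {y. norm (x - y) > 1} y * ((f y - f x) * j x y))"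

definition Chat :: "('a::euclidean_space \<Rightarrow> real) \<Rightarrow> ('a \<Rightarrow> 'a \<Rightarrow> real) \<Rightarrow> ('a \<Rightarrow> real) set" where
  "Chat V j = {\<phi>. smooth \<phi> \<and>
      locbdd_ennreal (\<lambda>x. \<integral>\<^sup>+ y. indicator {y. norm (x - y) > 1} y * ennreal (\<bar>\<phi> y\<bar> * j x y) \<partial>muV V)}"

text \<open>kappa_r (in ennreal; 1/j = \<infinity> where j = 0).\<close>
definition kappa :: "('a::euclidean_space \<Rightarrow> real) \<Rightarrow> ('a \<Rightarrow> 'a \<Rightarrow> real) \<Rightarrow> real \<Rightarrow> ennreal" where
  "kappa V j r = (SUP x\<in>ball 0 r. \<integral>\<^sup>+ y\<in>ball 0 r. inverse (ennreal (j x y)) \<partial>muV V)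
                  / (emeasure (muV V) (ball 0 r))\<^sup>2"

end

theory Submission
  imports Defs
begin


lemma muV_sets[simp, measurable_cong]: "sets (muV V) = sets borel"
  by (simp add: muV_def)

lemma muV_space[simp]: "space (muV V) = UNIV"
  by (simp add: muV_def)

lemma Z_pos:
  fixes V :: "'a::euclidean_space \<Rightarrow> real"
  assumes "V \<in> borel_measurable borel" "integrable lborel (\<lambda>x. exp (- V x))"
  shows "(LINT y|lborel. exp (- V y)) > 0"
proof -
  have "(LINT y|lborel. exp (- V y)) \<ge> 0" by simp
  moreover have "(LINT y|lborel. exp (- V y)) \<noteq> 0"
  proof
    assume "(LINT y|lborel. exp (- V y)) = 0"
    then have "AE x in lborel. exp (- V x) = 0"
      using integral_nonneg_eq_0_iff_AE[OF assms(2)] by simp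
    then have "AE x::'a in lborel. False" by simp
    then obtain N :: "'a set" where N: "{x\<in>space lborel. \<not>False} \<subseteq> N" "emeasure lborel N = 0" "N \<in> sets lborel"
      by (rule AE_E)
    then have "emeasure lborel (UNIV::'a set) \<le> emeasure lborel N"
      by (intro emeasure_mono) auto
    then show False using N by simp
  qed
  ultimately show ?thesis by linarith
qed

lemma muV_prob:
  fixes V :: "'a::euclidean_space \<Rightarrow> real"
  assumes Vm: "V \<in> borel_measurable borel" and Vi: "integrable lborel (\<lambda>x. exp (- V x))"
  shows "prob_space (muV V)"
proof
  let ?Z = "LINT y|lborel. exp (- V y)"
  have Z: "?Z > 0" using Z_pos[OF assms] .
  have "emeasure (muV V) (space (muV V)) = (\<integral>\<^sup>+ x. ennreal (exp (- V x) / ?Z) \<partial>lborel)"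
    unfolding muV_def using Vm by (simp add: emeasure_density)
  also have "\<dots> = (\<integral>\<^sup>+ x. ennreal (exp (- V x)) * ennreal (1/ ?Z) \<partial>lborel)"
    using Z by (intro nn_integral_cong) (simp add: ennreal_mult[symmetric])
  also have "\<dots> = (\<integral>\<^sup>+ x. ennreal (exp (- V x)) \<partial>lborel) * ennreal (1/ ?Z)"
    using Vm by (simp add: nn_integral_multc)
  also have "(\<integral>\<^sup>+ x. ennreal (exp (- V x)) \<partial>lborel) = ennreal ?Z"
    using Vi by (intro nn_integral_eq_integral) auto
  also have "ennreal ?Z * ennreal (1/?Z) = 1"
    using Z by (simp add: ennreal_mult[symmetric])
  finally show "emeasure (muV V) (space (muV V)) = 1" .
qed


lemma sets_muV2: "sets (muV V \<Otimes>\<^sub>M muV V) = sets (borel :: ('a::euclidean_space \<times> 'a) measure)"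
proof -
  have "sets (muV V \<Otimes>\<^sub>M muV V) = sets (borel \<Otimes>\<^sub>M (borel :: 'a measure))"
    by (intro sets_pair_measure_cong) auto
  also have "\<dots> = sets (borel :: ('a \<times> 'a) measure)" by (metis borel_prod)
  finally show ?thesis .
qed

lemma j_meas_pair:
  fixes j :: "'a::euclidean_space \<Rightarrow> 'a \<Rightarrow> real"
  assumes "(\<lambda>(x, y). j x y) \<in> borel_measurable borel"
  shows "(\<lambda>p. j (fst p) (snd p)) \<in> borel_measurable (muV V \<Otimes>\<^sub>M muV V)"
proof -
  have "(\<lambda>p. j (fst p) (snd p)) = (\<lambda>(x, y). j x y)" by auto
  then show ?thesis using assms measurable_cong_sets[OF sets_muV2[of V] refl] by auto
qed

lemma j_meas_raw:
  fixes j :: "'a::euclidean_space \<Rightarrow> 'a \<Rightarrow> real"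
  assumes "(\<lambda>(x, y). j x y) \<in> borel_measurable borel"
    and "f \<in> measurable M (muV V)" and "g \<in> measurable M (muV V)"
  shows "(\<lambda>x. j (f x) (g x)) \<in> borel_measurable M"
proof -
  have "(\<lambda>x. (f x, g x)) \<in> measurable M (muV V \<Otimes>\<^sub>M muV V)"
    using assms(2,3) by (rule measurable_Pair)
  from measurable_comp[OF this j_meas_pair[OF assms(1)]] show ?thesis by (simp add: comp_def)
qed

lemma cont_meas:
  fixes f :: "'a::euclidean_space \<Rightarrow> real"
  assumes "continuous_on UNIV f"
  shows "f \<in> borel_measurable (muV V)"
  using borel_measurable_continuous_onI[OF assms] measurable_cong_sets[OF muV_sets refl] by auto

lemma smooth_cont: "smooth f \<Longrightarrow> continuous_on UNIV f"
  unfolding smooth_def by (metis Ck.simps(1) mem_Collect_eq)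

lemma smooth_bdd_cont: "smooth_bdd f \<Longrightarrow> continuous_on UNIV f \<and> bounded (range f)"
  unfolding smooth_bdd_def by (metis Cbk.simps(1) mem_Collect_eq)

locale setting =
  fixes V :: "'a::euclidean_space \<Rightarrow> real" and j :: "'a \<Rightarrow> 'a \<Rightarrow> real"
    and \<phi> h :: "'a \<Rightarrow> real" and b r0 :: real
  assumes V_meas: "V \<in> borel_measurable borel"
    and V_int: "integrable lborel (\<lambda>x. exp (- V x))"
    and j_meas: "(\<lambda>(x, y). j x y) \<in> borel_measurable borel"
    and j_nonneg: "\<forall>x y. x \<noteq> y \<longrightarrow> 0 \<le> j x y"
    and j_sym: "\<forall>x y. x \<noteq> y \<longrightarrow> j x y = j y x"
    and I1_L1: "(\<integral>\<^sup>+ x. I1 V j x \<partial>muV V) < \<infinity>"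
    and I1_locbdd: "locbdd_ennreal (I1 V j)"
    and phi_C: "\<phi> \<in> Chat V j"
    and phi_ge: "\<forall>x. \<phi> x \<ge> 1"
    and h_smooth: "smooth h"
    and h_pos: "\<forall>x. h x > 0"
    and b_pos: "b > 0" and r0_pos: "r0 > 0"
    and lyap: "\<forall>x. Lhat V j \<phi> x \<le> - h x + b * indicator (ball 0 r0) x"
    and phi_h_int: "(\<integral>\<^sup>+ x. ennreal (\<phi> x / h x) \<partial>muV V) < \<infinity>"
    and kappa_fin: "\<forall>r>1. kappa V j r < \<infinity>"
begin

abbreviation "\<mu> \<equiv> muV V"

lemma prob: "prob_space \<mu>" using muV_prob[OF V_meas V_int] .

lemma sf: "pair_sigma_finite \<mu> \<mu>"
  using prob by (simp add: pair_sigma_finite_def prob_space_imp_sigma_finite)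

lemma sfm: "sigma_finite_measure \<mu>"
  using prob by (simp add: prob_space_imp_sigma_finite)

lemma jm[measurable (raw)]:
  "f \<in> measurable M \<mu> \<Longrightarrow> g \<in> measurable M \<mu> \<Longrightarrow> (\<lambda>x. j (f x) (g x)) \<in> borel_measurable M"
  by (rule j_meas_raw[OF j_meas])

lemma phim[measurable]: "\<phi> \<in> borel_measurable \<mu>"
  using phi_C by (auto simp: Chat_def intro!: cont_meas smooth_cont)

lemma hm[measurable]: "h \<in> borel_measurable \<mu>"
  using h_smooth by (auto intro!: cont_meas smooth_cont)

lemma test:
  assumes [measurable]: "g \<in> borel_measurable \<mu>"
  shows "(\<lambda>(x,y). ennreal (indicator {y. norm (x - y) > 1} y * (g x ^ 2 * \<phi> y / \<phi> x * j x y)))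
     \<in> borel_measurable (\<mu> \<Otimes>\<^sub>M \<mu>)"
  by measurable

lemma test2:
  assumes [measurable]: "g \<in> borel_measurable \<mu>"
  shows "(\<lambda>x. \<integral>\<^sup>+y. ennreal (indicator {y. norm (x - y) > 1} y * (g x ^ 2 * \<phi> y / \<phi> x * j x y)) \<partial>\<mu>)
     \<in> borel_measurable \<mu>"
  by (rule sigma_finite_measure.borel_measurable_nn_integral[OF sfm]) measurable

end


context setting begin

lemma nnm[measurable (raw)]:
  "case_prod f \<in> borel_measurable (N \<Otimes>\<^sub>M \<mu>) \<Longrightarrow> (\<lambda>x. \<integral>\<^sup>+ y. f x y \<partial>\<mu>) \<in> borel_measurable N"
  by (rule sigma_finite_measure.borel_measurable_nn_integral[OF sfm])

abbreviation "Sx x \<equiv> {y. 1 < norm (x - y)}"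

lemma jS: "y \<in> Sx x \<Longrightarrow> 0 \<le> j x y"
  using j_nonneg by (metis diff_self norm_zero mem_Collect_eq not_one_less_zero)

lemma ind_j_nonneg: "0 \<le> indicator (Sx x) y * j x y"
  using jS[of y x] by (cases "y \<in> Sx x") auto

lemma I1_fin: "I1 V j x < \<infinity>"
proof -
  have "compact {x}" by simp
  then obtain C :: real where "\<forall>z\<in>{x}. I1 V j z \<le> ennreal C"
    using I1_locbdd unfolding locbdd_ennreal_def by blast
  then show ?thesis using ennreal_less_top le_less_trans by fastforce
qed

lemma J_le_I1: "(\<integral>\<^sup>+y. ennreal (indicator (Sx x) y * j x y) \<partial>\<mu>) \<le> I1 V j x"
  unfolding I1_def
proof (intro nn_integral_mono)
  fix y
  show "ennreal (indicator (Sx x) y * j x y) \<le> ennreal (min 1 ((norm (x - y))\<^sup>2) * j x y)"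
  proof (cases "y \<in> Sx x")
    case True
    then have "(norm (x - y))\<^sup>2 \<ge> 1" by (simp add: one_le_power)
    then have "min 1 ((norm (x - y))\<^sup>2) = 1" by simp
    then show ?thesis using True by simp
  qed simp
qed

lemma int_J: "integrable \<mu> (\<lambda>y. indicator (Sx x) y * j x y)"
proof (rule integrableI_nonneg)
  show "AE y in \<mu>. 0 \<le> indicator (Sx x) y * j x y" using ind_j_nonneg by simp
  show "(\<integral>\<^sup>+y. ennreal (indicator (Sx x) y * j x y) \<partial>\<mu>) < \<infinity>"
    using J_le_I1 I1_fin le_less_trans by blast
qed measurable

lemma P_fin: "(\<integral>\<^sup>+ y. indicator (Sx x) y * ennreal (\<bar>\<phi> y\<bar> * j x y) \<partial>\<mu>) < \<infinity>"
proof -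
  have "compact {x}" by simp
  then obtain C :: real where "\<forall>z\<in>{x}. (\<integral>\<^sup>+ y. indicator (Sx z) y * ennreal (\<bar>\<phi> y\<bar> * j z y) \<partial>\<mu>) \<le> ennreal C"
    using phi_C unfolding Chat_def locbdd_ennreal_def by blast
  then show ?thesis using ennreal_less_top le_less_trans by fastforce
qed

lemma int_P: "integrable \<mu> (\<lambda>y. indicator (Sx x) y * (\<phi> y * j x y))"
proof (rule integrableI_nonneg)
  show "AE y in \<mu>. 0 \<le> indicator (Sx x) y * (\<phi> y * j x y)"
    by (intro AE_I2) (auto simp: indicator_def intro!: mult_nonneg_nonneg jS order_trans[OF zero_le_one phi_ge[rule_format]])
  have "(\<integral>\<^sup>+y. ennreal (indicator (Sx x) y * (\<phi> y * j x y)) \<partial>\<mu>)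
      = (\<integral>\<^sup>+ y. indicator (Sx x) y * ennreal (\<bar>\<phi> y\<bar> * j x y) \<partial>\<mu>)"
    using phi_ge by (intro nn_integral_cong) (auto simp: indicator_def abs_of_nonneg order_trans[OF zero_le_one])
  then show "(\<integral>\<^sup>+y. ennreal (indicator (Sx x) y * (\<phi> y * j x y)) \<partial>\<mu>) < \<infinity>"
    using P_fin by simp
qed measurable

lemma Lhat_eq: "Lhat V j \<phi> x = (LINT y|\<mu>. indicator (Sx x) y * (\<phi> y * j x y))
     - \<phi> x * (LINT y|\<mu>. indicator (Sx x) y * j x y)"
proof -
  have "Lhat V j \<phi> x = (LINT y|\<mu>. indicator (Sx x) y * (\<phi> y * j x y) - \<phi> x * (indicator (Sx x) y * j x y))"
    unfolding Lhat_def by (intro Bochner_Integration.integral_cong) (auto simp: algebra_simps)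
  also have "\<dots> = (LINT y|\<mu>. indicator (Sx x) y * (\<phi> y * j x y)) - (LINT y|\<mu>. \<phi> x * (indicator (Sx x) y * j x y))"
    using Bochner_Integration.integral_diff[OF int_P[of x] integrable_mult_right[OF int_J[of x], of "\<phi> x"]] by simp
  finally show ?thesis by simp
qed

end


context setting begin

lemma pw:
  assumes gm[measurable]: "g \<in> borel_measurable \<mu>"
  shows "ennreal (g x ^ 2 * h x / \<phi> x) + (\<integral>\<^sup>+y. ennreal (indicator (Sx x) y * (g x ^ 2 * \<phi> y / \<phi> x * j x y)) \<partial>\<mu>)
   \<le> (\<integral>\<^sup>+y. ennreal (indicator (Sx x) y * (g x ^ 2 * j x y)) \<partial>\<mu>) + ennreal (b * (indicator (ball 0 r0) x * g x ^ 2))"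
proof -
  define P where "P = (LINT y|\<mu>. indicator (Sx x) y * (\<phi> y * j x y))"
  define J where "J = (LINT y|\<mu>. indicator (Sx x) y * j x y)"
  define I where "I = (indicator (ball 0 r0) x :: real)"
  have I01: "0 \<le> I" "I \<le> 1" by (auto simp: I_def indicator_def)
  have phx: "\<phi> x \<ge> 1" using phi_ge by auto
  have hx: "h x > 0" using h_pos by auto
  have ly: "P - \<phi> x * J \<le> - h x + b * I"
    using lyap[rule_format, of x] Lhat_eq[of x] unfolding P_def J_def I_def by linarith
  have nnP: "\<And>y. 0 \<le> indicator (Sx x) y * (\<phi> y * j x y)"
    by (auto simp: indicator_def intro!: mult_nonneg_nonneg jS order_trans[OF zero_le_one phi_ge[rule_format]])
  have c0: "0 \<le> g x ^ 2 / \<phi> x" using phx by simp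
  have K2: "(\<integral>\<^sup>+y. ennreal (indicator (Sx x) y * (g x ^ 2 * \<phi> y / \<phi> x * j x y)) \<partial>\<mu>)
      = ennreal (g x ^ 2 / \<phi> x * P)"
  proof -
    have "(\<integral>\<^sup>+y. ennreal (indicator (Sx x) y * (g x ^ 2 * \<phi> y / \<phi> x * j x y)) \<partial>\<mu>)
       = (\<integral>\<^sup>+y. ennreal (g x ^ 2 / \<phi> x * (indicator (Sx x) y * (\<phi> y * j x y))) \<partial>\<mu>)"
      by (intro nn_integral_cong) (simp add: algebra_simps)
    also have "\<dots> = ennreal (LINT y|\<mu>. g x ^ 2 / \<phi> x * (indicator (Sx x) y * (\<phi> y * j x y)))"
      by (rule nn_integral_eq_integral[OF integrable_mult_right[OF int_P] AE_I2[OF mult_nonneg_nonneg[OF c0 nnP]]])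
    finally show ?thesis by (simp add: P_def)
  qed
  have K1: "(\<integral>\<^sup>+y. ennreal (indicator (Sx x) y * (g x ^ 2 * j x y)) \<partial>\<mu>) = ennreal (g x ^ 2 * J)"
  proof -
    have "(\<integral>\<^sup>+y. ennreal (indicator (Sx x) y * (g x ^ 2 * j x y)) \<partial>\<mu>)
       = (\<integral>\<^sup>+y. ennreal (g x ^ 2 * (indicator (Sx x) y * j x y)) \<partial>\<mu>)"
      by (intro nn_integral_cong) (simp add: algebra_simps)
    also have "\<dots> = ennreal (LINT y|\<mu>. g x ^ 2 * (indicator (Sx x) y * j x y))"
      by (rule nn_integral_eq_integral[OF integrable_mult_right[OF int_J] AE_I2[OF mult_nonneg_nonneg[OF zero_le_power2 ind_j_nonneg]]])
    finally show ?thesis by (simp add: J_def)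
  qed
  have "g x ^ 2 / \<phi> x * P \<le> g x ^ 2 / \<phi> x * (\<phi> x * J - h x + b * I)"
    using ly c0 by (intro mult_left_mono) auto
  also have "\<dots> = g x ^ 2 * J - g x ^ 2 * h x / \<phi> x + g x ^ 2 * (b * I) / \<phi> x"
    using phx by (simp add: field_simps)
  also have "g x ^ 2 * (b * I) / \<phi> x \<le> g x ^ 2 * (b * I)"
 proof -
    have "0 \<le> g x ^ 2 * (b * I)" using I01 b_pos by simp
    from divide_left_mono[OF phx this] phx show ?thesis by simp
  qed
  finally have real: "g x ^ 2 * h x / \<phi> x + g x ^ 2 / \<phi> x * P \<le> g x ^ 2 * J + b * (I * g x ^ 2)"
    by (simp add: algebra_simps)
  have nn1: "0 \<le> g x ^ 2 * h x / \<phi> x" using hx phx by simp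
  have nn2: "0 \<le> g x ^ 2 / \<phi> x * P"
    unfolding P_def using c0 nnP by (intro mult_nonneg_nonneg integral_nonneg) auto
  have nn3: "0 \<le> g x ^ 2 * J"
    unfolding J_def using ind_j_nonneg by (intro mult_nonneg_nonneg integral_nonneg) auto
  have nn4: "0 \<le> b * (I * g x ^ 2)" using b_pos I01 by simp
  have "ennreal (g x ^ 2 * h x / \<phi> x) + ennreal (g x ^ 2 / \<phi> x * P)
      = ennreal (g x ^ 2 * h x / \<phi> x + g x ^ 2 / \<phi> x * P)"
    using nn1 nn2 by (simp add: ennreal_plus)
  also have "\<dots> \<le> ennreal (g x ^ 2 * J + b * (I * g x ^ 2))"
    using real by (rule ennreal_leI)
  also have "\<dots> = ennreal (g x ^ 2 * J) + ennreal (b * (I * g x ^ 2))"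
    using nn3 nn4 by (simp add: ennreal_plus)
  finally show ?thesis using K1 K2 by (simp add: I_def)
qed

end


lemma sym_ineq:
  fixes q a c p r :: real
  assumes "q \<ge> 0" "p > 0" "r > 0"
  shows "q * a^2 + q * c^2 \<le> q * (c - a)^2 + q * (a^2 * r / p) + q * (c^2 * p / r)"
proof -
  have "0 \<le> (a * r - c * p)^2" by simp
  then have "2 * a * c * (r * p) \<le> a^2 * r^2 + c^2 * p^2" by (simp add: power2_eq_square algebra_simps)
  then have "2 * a * c \<le> (a^2 * r^2 + c^2 * p^2) / (r * p)"
    using assms by (simp add: le_divide_eq)
  also have "\<dots> = a^2 * r / p + c^2 * p / r"
    using assms by (simp add: field_simps power2_eq_square)
  finally have "a^2 + c^2 \<le> (c - a)^2 + (a^2 * r / p) + (c^2 * p / r)"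
    by (simp add: power2_eq_square algebra_simps)
  from mult_left_mono[OF this assms(1)] show ?thesis by (simp add: algebra_simps)
qed

context setting begin

lemma dbl_add:
  assumes [measurable]: "(\<lambda>(x,y). A x y) \<in> borel_measurable (\<mu> \<Otimes>\<^sub>M \<mu>)"
    "(\<lambda>(x,y). Bf x y) \<in> borel_measurable (\<mu> \<Otimes>\<^sub>M \<mu>)"
  shows "(\<integral>\<^sup>+x. \<integral>\<^sup>+y. A x y + Bf x y \<partial>\<mu> \<partial>\<mu>) = (\<integral>\<^sup>+x. \<integral>\<^sup>+y. A x y \<partial>\<mu> \<partial>\<mu>) + (\<integral>\<^sup>+x. \<integral>\<^sup>+y. Bf x y \<partial>\<mu> \<partial>\<mu>)"
proof -
  have "\<And>x. (\<integral>\<^sup>+y. A x y + Bf x y \<partial>\<mu>) = (\<integral>\<^sup>+y. A x y \<partial>\<mu>) + (\<integral>\<^sup>+y. Bf x y \<partial>\<mu>)"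
  proof -
    fix x
    have "(\<lambda>y. (\<lambda>(x,y). A x y) (x, y)) \<in> borel_measurable \<mu>"
      by (rule measurable_Pair2[OF assms(1)]) simp
    moreover have "(\<lambda>y. (\<lambda>(x,y). Bf x y) (x, y)) \<in> borel_measurable \<mu>"
      by (rule measurable_Pair2[OF assms(2)]) simp
    ultimately show "(\<integral>\<^sup>+y. A x y + Bf x y \<partial>\<mu>) = (\<integral>\<^sup>+y. A x y \<partial>\<mu>) + (\<integral>\<^sup>+y. Bf x y \<partial>\<mu>)"
      by (intro nn_integral_add) auto
  qed
  then have "(\<integral>\<^sup>+x. \<integral>\<^sup>+y. A x y + Bf x y \<partial>\<mu> \<partial>\<mu>) = (\<integral>\<^sup>+x. (\<integral>\<^sup>+y. A x y \<partial>\<mu>) + (\<integral>\<^sup>+y. Bf x y \<partial>\<mu>) \<partial>\<mu>)"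
    by simp
  also have "\<dots> = (\<integral>\<^sup>+x. \<integral>\<^sup>+y. A x y \<partial>\<mu> \<partial>\<mu>) + (\<integral>\<^sup>+x. \<integral>\<^sup>+y. Bf x y \<partial>\<mu> \<partial>\<mu>)"
    by (intro nn_integral_add) measurable
  finally show ?thesis .
qed

lemma swap:
  assumes "(\<lambda>(x,y). F x y) \<in> borel_measurable (\<mu> \<Otimes>\<^sub>M \<mu>)"
  shows "(\<integral>\<^sup>+x. \<integral>\<^sup>+y. F y x \<partial>\<mu> \<partial>\<mu>) = (\<integral>\<^sup>+x. \<integral>\<^sup>+y. F x y \<partial>\<mu> \<partial>\<mu>)"
  using pair_sigma_finite.Fubini'[OF sf assms] .

end


context setting begin

lemma ball_meas[measurable]: "ball (0::'a) r \<in> sets borel" by simp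

lemma swap_pt:
  "ennreal (indicator (Sx x) y * (u * j x y)) = ennreal (indicator (Sx y) x * (u * j y x))"
proof (cases "y \<in> Sx x")
  case True
  then have "x \<noteq> y" by auto
  moreover have "x \<in> Sx y" using True by (simp add: norm_minus_commute)
  ultimately show ?thesis using True j_sym by auto
next
  case False
  then have "x \<notin> Sx y" by (simp add: norm_minus_commute)
  then show ?thesis using False by simp
qed

lemma L1:
  assumes gm[measurable]: "g \<in> borel_measurable \<mu>" and gb: "\<forall>x. \<bar>g x\<bar> \<le> G"
  shows "2 * (\<integral>\<^sup>+x. ennreal (g x ^ 2 * h x / \<phi> x) \<partial>\<mu>)
    \<le> (\<integral>\<^sup>+x. \<integral>\<^sup>+y. ennreal ((g y - g x)^2 * j x y) \<partial>\<mu> \<partial>\<mu>)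
      + 2 * (ennreal b * (\<integral>\<^sup>+x. ennreal (indicator (ball 0 r0) x * g x ^ 2) \<partial>\<mu>))"
proof -
  define W where "W = (\<integral>\<^sup>+x. ennreal (g x ^ 2 * h x / \<phi> x) \<partial>\<mu>)"
  define R where "R = (\<integral>\<^sup>+x. ennreal (indicator (ball 0 r0) x * g x ^ 2) \<partial>\<mu>)"
  define T1 where "T1 = (\<integral>\<^sup>+x. \<integral>\<^sup>+y. ennreal (indicator (Sx x) y * (g x ^ 2 * j x y)) \<partial>\<mu> \<partial>\<mu>)"
  define T1' where "T1' = (\<integral>\<^sup>+x. \<integral>\<^sup>+y. ennreal (indicator (Sx x) y * (g y ^ 2 * j x y)) \<partial>\<mu> \<partial>\<mu>)"
  define T2 where "T2 = (\<integral>\<^sup>+x. \<integral>\<^sup>+y. ennreal (indicator (Sx x) y * (g x ^ 2 * \<phi> y / \<phi> x * j x y)) \<partial>\<mu> \<partial>\<mu>)"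
  define T2' where "T2' = (\<integral>\<^sup>+x. \<integral>\<^sup>+y. ennreal (indicator (Sx x) y * (g y ^ 2 * \<phi> x / \<phi> y * j x y)) \<partial>\<mu> \<partial>\<mu>)"
  define E where "E = (\<integral>\<^sup>+x. \<integral>\<^sup>+y. ennreal (indicator (Sx x) y * ((g y - g x)^2 * j x y)) \<partial>\<mu> \<partial>\<mu>)"
  define Df where "Df = (\<integral>\<^sup>+x. \<integral>\<^sup>+y. ennreal ((g y - g x)^2 * j x y) \<partial>\<mu> \<partial>\<mu>)"
  have main: "W + T2 \<le> T1 + ennreal b * R"
  proof -
    have "W + T2 = (\<integral>\<^sup>+x. ennreal (g x ^ 2 * h x / \<phi> x)
          + (\<integral>\<^sup>+y. ennreal (indicator (Sx x) y * (g x ^ 2 * \<phi> y / \<phi> x * j x y)) \<partial>\<mu>) \<partial>\<mu>)"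
      unfolding W_def T2_def by (intro nn_integral_add[symmetric]) measurable
    also have "\<dots> \<le> (\<integral>\<^sup>+x. (\<integral>\<^sup>+y. ennreal (indicator (Sx x) y * (g x ^ 2 * j x y)) \<partial>\<mu>)
          + ennreal (b * (indicator (ball 0 r0) x * g x ^ 2)) \<partial>\<mu>)"
      by (intro nn_integral_mono pw) simp
    also have "\<dots> = T1 + (\<integral>\<^sup>+x. ennreal (b * (indicator (ball 0 r0) x * g x ^ 2)) \<partial>\<mu>)"
      unfolding T1_def by (intro nn_integral_add) measurable
    also have "(\<integral>\<^sup>+x. ennreal (b * (indicator (ball 0 r0) x * g x ^ 2)) \<partial>\<mu>)
        = (\<integral>\<^sup>+x. ennreal b * ennreal (indicator (ball 0 r0) x * g x ^ 2) \<partial>\<mu>)"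
      using b_pos by (intro nn_integral_cong) (simp add: ennreal_mult)
    also have "\<dots> = ennreal b * R"
      unfolding R_def by (intro nn_integral_cmult) measurable
    finally show ?thesis .
  qed
  have G0: "0 \<le> G" using gb abs_ge_zero order_trans by blast
  have g2: "\<And>x. g x ^ 2 \<le> G ^ 2"
    using gb power_mono[OF _ abs_ge_zero, of _ G 2] by (metis power2_abs)
  have I1m: "I1 V j \<in> borel_measurable \<mu>"
    unfolding I1_def by measurable
  have T1fin: "T1 < \<infinity>"
  proof -
    have "T1 \<le> (\<integral>\<^sup>+x. ennreal (G^2) * I1 V j x \<partial>\<mu>)"
      unfolding T1_def
    proof (intro nn_integral_mono)
      fix x
      have "(\<integral>\<^sup>+y. ennreal (indicator (Sx x) y * (g x ^ 2 * j x y)) \<partial>\<mu>)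
          \<le> (\<integral>\<^sup>+y. ennreal (G^2) * ennreal (min 1 ((norm (x - y))\<^sup>2) * j x y) \<partial>\<mu>)"
      proof (intro nn_integral_mono)
        fix y
        show "ennreal (indicator (Sx x) y * (g x ^ 2 * j x y)) \<le> ennreal (G^2) * ennreal (min 1 ((norm (x - y))\<^sup>2) * j x y)"
        proof (cases "y \<in> Sx x")
          case True
          then have "(norm (x - y))\<^sup>2 \<ge> 1" by (simp add: one_le_power)
          then have m1: "min 1 ((norm (x - y))\<^sup>2) = 1" by simp
          have "g x ^ 2 * j x y \<le> G^2 * j x y"
            using g2 jS[OF True] by (intro mult_right_mono) auto
          then show ?thesis using True m1 by (simp add: ennreal_mult'[symmetric] ennreal_leI)
        qed simp
      qed
      also have "\<dots> = ennreal (G^2) * I1 V j x"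
        unfolding I1_def by (intro nn_integral_cmult) measurable
      finally show "(\<integral>\<^sup>+y. ennreal (indicator (Sx x) y * (g x ^ 2 * j x y)) \<partial>\<mu>) \<le> ennreal (G^2) * I1 V j x" .
    qed
    also have "\<dots> = ennreal (G^2) * (\<integral>\<^sup>+x. I1 V j x \<partial>\<mu>)"
      using I1m by (intro nn_integral_cmult) auto
    also have "\<dots> < \<infinity>" using I1_L1 by (simp add: ennreal_mult_less_top)
    finally show ?thesis .
  qed
  have Rfin: "R < \<infinity>"
  proof -
    have "R \<le> (\<integral>\<^sup>+x. ennreal (G^2) \<partial>\<mu>)"
      unfolding R_def using g2 by (intro nn_integral_mono ennreal_leI) (auto simp: indicator_def)
    also have "\<dots> = ennreal (G^2)"
      using prob_space.emeasure_space_1[OF prob] by simp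
    finally show ?thesis by (rule le_less_trans) simp
  qed
  have T2fin: "T2 < \<infinity>"
  proof -
    have "T2 \<le> W + T2" by simp
    also have "\<dots> \<le> T1 + ennreal b * R" by (rule main)
    also have "\<dots> < \<infinity>" using T1fin Rfin by (simp add: ennreal_mult_less_top)
    finally show ?thesis .
  qed
  have T1'eq: "T1' = T1"
  proof -
    have "T1' = (\<integral>\<^sup>+x. \<integral>\<^sup>+y. (\<lambda>x y. ennreal (indicator (Sx x) y * (g x ^ 2 * j x y))) y x \<partial>\<mu> \<partial>\<mu>)"
      unfolding T1'_def by (intro nn_integral_cong) (rule swap_pt)
    also have "\<dots> = T1" unfolding T1_def by (rule swap) measurable
    finally show ?thesis .
  qed
  have T2'eq: "T2' = T2"
  proof -
    have "T2' = (\<integral>\<^sup>+x. \<integral>\<^sup>+y. (\<lambda>x y. ennreal (indicator (Sx x) y * (g x ^ 2 * \<phi> y / \<phi> x * j x y))) y x \<partial>\<mu> \<partial>\<mu>)"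
      unfolding T2'_def by (intro nn_integral_cong) (rule swap_pt)
    also have "\<dots> = T2" unfolding T2_def by (rule swap) measurable
    finally show ?thesis .
  qed
  have symm: "T1 + T1' \<le> E + T2 + T2'"
  proof -
    have "T1 + T1' = (\<integral>\<^sup>+x. \<integral>\<^sup>+y. ennreal (indicator (Sx x) y * (g x ^ 2 * j x y))
          + ennreal (indicator (Sx x) y * (g y ^ 2 * j x y)) \<partial>\<mu> \<partial>\<mu>)"
      unfolding T1_def T1'_def by (rule dbl_add[symmetric]) measurable
    also have "\<dots> \<le> (\<integral>\<^sup>+x. \<integral>\<^sup>+y. (ennreal (indicator (Sx x) y * ((g y - g x)^2 * j x y))
          + ennreal (indicator (Sx x) y * (g x ^ 2 * \<phi> y / \<phi> x * j x y)))
          + ennreal (indicator (Sx x) y * (g y ^ 2 * \<phi> x / \<phi> y * j x y)) \<partial>\<mu> \<partial>\<mu>)"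
    proof (intro nn_integral_mono)
      fix x y
      define q where "q = indicator (Sx x) y * j x y"
      have q0: "q \<ge> 0" unfolding q_def by (rule ind_j_nonneg)
      have px: "\<phi> x > 0" "\<phi> y > 0" using phi_ge by (auto intro: less_le_trans[OF zero_less_one])
      have ineq: "q * g x ^2 + q * g y ^2 \<le> q * (g y - g x)^2 + q * (g x ^2 * \<phi> y / \<phi> x) + q * (g y ^2 * \<phi> x / \<phi> y)"
        by (rule sym_ineq[OF q0 px])
      have e1: "indicator (Sx x) y * (g x ^ 2 * j x y) = q * g x ^ 2"
        and e2: "indicator (Sx x) y * (g y ^ 2 * j x y) = q * g y ^ 2"
        and e3: "indicator (Sx x) y * ((g y - g x)^2 * j x y) = q * (g y - g x)^2"
        and e4: "indicator (Sx x) y * (g x ^ 2 * \<phi> y / \<phi> x * j x y) = q * (g x ^2 * \<phi> y / \<phi> x)"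
        and e5: "indicator (Sx x) y * (g y ^ 2 * \<phi> x / \<phi> y * j x y) = q * (g y ^2 * \<phi> x / \<phi> y)"
        unfolding q_def by (simp_all add: algebra_simps)
      have n1: "0 \<le> q * g x ^ 2" "0 \<le> q * g y ^ 2" "0 \<le> q * (g y - g x)^2"
        "0 \<le> q * (g x ^2 * \<phi> y / \<phi> x)" "0 \<le> q * (g y ^2 * \<phi> x / \<phi> y)"
        using q0 px by simp_all
      have "ennreal (q * g x ^2) + ennreal (q * g y ^2) = ennreal (q * g x ^2 + q * g y ^2)"
        using n1 by (simp add: ennreal_plus)
      also have "\<dots> \<le> ennreal (q * (g y - g x)^2 + q * (g x ^2 * \<phi> y / \<phi> x) + q * (g y ^2 * \<phi> x / \<phi> y))"
        using ineq by (rule ennreal_leI)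
      also have "\<dots> = ennreal (q * (g y - g x)^2) + ennreal (q * (g x ^2 * \<phi> y / \<phi> x)) + ennreal (q * (g y ^2 * \<phi> x / \<phi> y))"
        using n1 by (simp add: ennreal_plus)
      finally show "ennreal (indicator (Sx x) y * (g x ^ 2 * j x y)) + ennreal (indicator (Sx x) y * (g y ^ 2 * j x y))
          \<le> ennreal (indicator (Sx x) y * ((g y - g x)^2 * j x y))
          + ennreal (indicator (Sx x) y * (g x ^ 2 * \<phi> y / \<phi> x * j x y))
          + ennreal (indicator (Sx x) y * (g y ^ 2 * \<phi> x / \<phi> y * j x y))"
        unfolding e1 e2 e3 e4 e5 .
    qed
    also have "\<dots> = (\<integral>\<^sup>+x. \<integral>\<^sup>+y. ennreal (indicator (Sx x) y * ((g y - g x)^2 * j x y))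
          + ennreal (indicator (Sx x) y * (g x ^ 2 * \<phi> y / \<phi> x * j x y)) \<partial>\<mu> \<partial>\<mu>) + T2'"
      unfolding T2'_def by (rule dbl_add) measurable
    also have "(\<integral>\<^sup>+x. \<integral>\<^sup>+y. ennreal (indicator (Sx x) y * ((g y - g x)^2 * j x y))
          + ennreal (indicator (Sx x) y * (g x ^ 2 * \<phi> y / \<phi> x * j x y)) \<partial>\<mu> \<partial>\<mu>) = E + T2"
      unfolding E_def T2_def by (rule dbl_add) measurable
    finally show ?thesis .
  qed
  have EDf: "E \<le> Df"
    unfolding E_def Df_def
    by (intro nn_integral_mono) (auto simp: indicator_def)
  have "(T2 + T2) + 2 * W = 2 * (W + T2)" by (simp add: mult_2 mult_2_right add_ac)
  also have "\<dots> \<le> 2 * (T1 + ennreal b * R)" using main by (intro mult_left_mono) auto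
  also have "\<dots> = (T1 + T1') + 2 * (ennreal b * R)" unfolding T1'eq by (simp add: mult_2 mult_2_right add_ac)
  also have "\<dots> \<le> (E + T2 + T2') + 2 * (ennreal b * R)" using symm by (intro add_right_mono)
  also have "\<dots> = (T2 + T2) + (E + 2 * (ennreal b * R))" unfolding T2'eq by (simp add: add_ac)
  finally have "2 * W \<le> E + 2 * (ennreal b * R)"
    using T2fin by (auto simp add: ennreal_add_left_cancel_le)
  also have "\<dots> \<le> Df + 2 * (ennreal b * R)" using EDf by (intro add_right_mono)
  finally show ?thesis unfolding W_def Df_def R_def .
qed

end


context setting begin

lemma ball_pos: "r > 0 \<Longrightarrow> emeasure \<mu> (ball 0 r) > 0"
proof (rule ccontr)
  assume r: "r > 0" and "\<not> emeasure \<mu> (ball 0 r) > 0"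
  then have e0: "emeasure \<mu> (ball 0 r) = 0" by simp
  let ?Z = "LINT y|lborel. exp (- V y)"
  have Z: "?Z > 0" using Z_pos[OF V_meas V_int] .
  have "emeasure \<mu> (ball 0 r) = (\<integral>\<^sup>+ x. ennreal (exp (- V x) / ?Z) * indicator (ball 0 r) x \<partial>lborel)"
    unfolding muV_def using V_meas by (subst emeasure_density) auto
  then have "(\<integral>\<^sup>+ x. ennreal (exp (- V x) / ?Z) * indicator (ball 0 r) x \<partial>lborel) = 0" using e0 by simp
  then have "AE x in lborel. ennreal (exp (- V x) / ?Z) * indicator (ball 0 r) x = 0"
    using V_meas by (subst nn_integral_0_iff_AE[symmetric]) auto
  then have "AE x::'a in lborel. x \<notin> ball 0 r"
    using Z by (auto elim!: AE_mp simp: indicator_def)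
  then obtain N :: "'a set" where N: "{x\<in>space lborel. \<not> x \<notin> ball 0 r} \<subseteq> N" "emeasure lborel N = 0" "N \<in> sets lborel"
    by (rule AE_E)
  then have "emeasure lborel (ball (0::'a) r) \<le> emeasure lborel N"
    by (intro emeasure_mono) auto
  then have "emeasure lborel (ball (0::'a) r) = 0" using N by simp
  moreover have "measure lborel (ball (0::'a) r) > 0" using content_ball_pos[OF r] .
  ultimately show False by (simp add: measure_def)
qed

lemma ball_fin: "emeasure \<mu> (ball 0 r) < \<infinity>"
proof -
  have "emeasure \<mu> (ball 0 r) \<le> emeasure \<mu> (space \<mu>)" by (intro emeasure_mono) auto
  also have "\<dots> = 1" using prob_space.emeasure_space_1[OF prob] .
  finally show ?thesis by (rule le_less_trans) simp
qed

end


locale lp = setting V j \<phi> h b r0 for V :: "'a::euclidean_space \<Rightarrow> real" and j \<phi> h b r0 +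
  fixes r :: real
  assumes r1: "r > 1"
begin

abbreviation "B \<equiv> ball (0::'a) r"
abbreviation "m \<equiv> emeasure \<mu> B"
abbreviation "Mx \<equiv> (SUP x\<in>B. \<integral>\<^sup>+ y\<in>B. inverse (ennreal (j x y)) \<partial>\<mu>)"

lemma four: "4 * (a::ennreal) = a + a + a + a"
proof -
  have "(2 + 2) * a = 2 * a + 2 * a" by (rule distrib_right)
  moreover have "(2 + 2::ennreal) = 4" by simp
  ultimately have "4 * a = 2 * a + 2 * a" by simp
  then show ?thesis by (simp only: mult_2 add.assoc)
qed

lemma m0: "0 < m" using ball_pos r1 by simp
lemma mfin: "m < \<infinity>" using ball_fin .

lemma Mfin: "Mx < \<infinity>"
proof (rule ccontr)
  assume "\<not> Mx < \<infinity>"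
  then have Mt: "Mx = \<infinity>" by (simp only: not_less infinity_ennreal_def top_unique)
  have "m ^ 2 < top" using mfin by (simp only: power_less_top_ennreal) simp
  then have "m ^ 2 \<noteq> top" by simp
  then have "Mx / m ^ 2 = top" unfolding ennreal_divide_eq_top_iff Mt by simp
  then have "kappa V j r = \<infinity>"
    unfolding kappa_def by simp
  moreover have "kappa V j r < \<infinity>" using kappa_fin r1 by simp
  ultimately show False by simp
qed

definition "mr = enn2real m"
definition "Mr = enn2real Mx"
definition "eps = mr / (4 * (Mr + 1))"

lemma m_eq: "m = ennreal mr" unfolding mr_def using mfin by simp
lemma M_eq: "Mx = ennreal Mr" unfolding Mr_def using Mfin by simp
lemma mr_pos: "mr > 0" using m0 m_eq by simp
lemma Mr_nn: "Mr \<ge> 0" unfolding Mr_def by simp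
lemma eps_pos: "eps > 0" unfolding eps_def using mr_pos Mr_nn by simp

lemma eM: "4 * (ennreal eps * Mx) \<le> m"
proof -
  have "4 * eps * Mr = mr * (Mr / (Mr + 1))"
    unfolding eps_def using Mr_nn by (simp add: field_simps)
  also have "\<dots> \<le> mr * 1" using mr_pos Mr_nn by (intro mult_left_mono) auto
  finally have re: "4 * eps * Mr \<le> mr" by simp
  have "ennreal (4 * eps * Mr) = ennreal 4 * (ennreal eps * ennreal Mr)"
    using eps_pos Mr_nn by (simp add: ennreal_mult mult.assoc)
  then have "4 * (ennreal eps * Mx) = ennreal (4 * eps * Mr)"
    unfolding M_eq by simp
  also have "\<dots> \<le> m" unfolding m_eq using re by (rule ennreal_leI)
  finally show ?thesis .
qed

lemma mark:
  assumes x: "x \<in> B"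
  shows "(\<integral>\<^sup>+z. ennreal (indicator B z * indicator {z. j x z < eps} z) \<partial>\<mu>) \<le> ennreal eps * Mx"
proof -
  have "(\<integral>\<^sup>+z. ennreal (indicator B z * indicator {z. j x z < eps} z) \<partial>\<mu>)
      \<le> (\<integral>\<^sup>+z. ennreal eps * (inverse (ennreal (j x z)) * indicator B z) \<partial>\<mu>)"
  proof (intro nn_integral_mono)
    fix z
    show "ennreal (indicator B z * indicator {z. j x z < eps} z) \<le> ennreal eps * (inverse (ennreal (j x z)) * indicator B z)"
    proof (cases "z \<in> B \<and> j x z < eps")
      case True
      have "1 \<le> ennreal eps * inverse (ennreal (j x z))"
      proof (cases "j x z \<le> 0")
        case True
        then have "ennreal (j x z) = 0" by (simp add: ennreal_eq_0_iff)
        then show ?thesis using eps_pos by (simp add: ennreal_mult_top)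
      next
        case False
        then have jp: "j x z > 0" by simp
        then have "inverse (ennreal (j x z)) = ennreal (inverse (j x z))" by (rule inverse_ennreal)
        moreover have "1 \<le> eps * inverse (j x z)"
          using jp True by (simp add: field_simps)
        ultimately show ?thesis using eps_pos jp
          by (simp add: ennreal_mult[symmetric] ennreal_leI)
      qed
      then show ?thesis using True by simp
    qed (auto simp: indicator_def)
  qed
  also have "\<dots> = ennreal eps * (\<integral>\<^sup>+ z\<in>B. inverse (ennreal (j x z)) \<partial>\<mu>)"
    by (intro nn_integral_cmult) measurable
  also have "\<dots> \<le> ennreal eps * Mx"
    using x by (intro mult_left_mono SUP_upper) auto
  finally show ?thesis .
qed

abbreviation "Gi x z \<equiv> (indicator {z. eps \<le> j x z} z :: real)"

lemma cover:
  assumes x: "x \<in> B" and y: "y \<in> B"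
  shows "m \<le> 2 * (\<integral>\<^sup>+z. ennreal (indicator B z * Gi x z * Gi y z) \<partial>\<mu>)"
proof -
  define X where "X = (\<integral>\<^sup>+z. ennreal (indicator B z * Gi x z * Gi y z) \<partial>\<mu>)"
  have "m = (\<integral>\<^sup>+z. indicator B z \<partial>\<mu>)" by simp
  also have "\<dots> \<le> (\<integral>\<^sup>+z. (ennreal (indicator B z * Gi x z * Gi y z)
      + ennreal (indicator B z * indicator {z. j x z < eps} z))
      + ennreal (indicator B z * indicator {z. j y z < eps} z) \<partial>\<mu>)"
    by (intro nn_integral_mono) (auto simp: indicator_def not_le)
  also have "\<dots> = (\<integral>\<^sup>+z. ennreal (indicator B z * Gi x z * Gi y z)
      + ennreal (indicator B z * indicator {z. j x z < eps} z) \<partial>\<mu>)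
      + (\<integral>\<^sup>+z. ennreal (indicator B z * indicator {z. j y z < eps} z) \<partial>\<mu>)"
    by (intro nn_integral_add) measurable
  also have "(\<integral>\<^sup>+z. ennreal (indicator B z * Gi x z * Gi y z)
      + ennreal (indicator B z * indicator {z. j x z < eps} z) \<partial>\<mu>)
      = X + (\<integral>\<^sup>+z. ennreal (indicator B z * indicator {z. j x z < eps} z) \<partial>\<mu>)"
    unfolding X_def by (intro nn_integral_add) measurable
  finally have "m \<le> X + ennreal eps * Mx + ennreal eps * Mx"
    using mark[OF x] mark[OF y] by (meson add_mono order_trans order_refl)
  then have "2 * m \<le> 2 * (X + ennreal eps * Mx + ennreal eps * Mx)"
    by (intro mult_left_mono) auto
  also have "\<dots> = 2 * X + 4 * (ennreal eps * Mx)"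
    unfolding four by (simp add: mult_2 add_ac)
  also have "\<dots> \<le> 2 * X + m" using eM by (intro add_left_mono)
  finally have "m + m \<le> m + 2 * X" by (simp add: mult_2 add_ac)
  then show ?thesis using mfin unfolding X_def by (auto simp: ennreal_add_left_cancel_le)
qed

end


context lp begin

lemma sq_tri: "((u::real) - v)^2 \<le> 2 * (u - w)^2 + 2 * (v - w)^2"
proof -
  have "0 \<le> ((u - w) + (v - w))^2" by simp
  then show ?thesis by (simp add: power2_eq_square algebra_simps)
qed

lemma pt3:
  "ennreal ((f x - f y)^2) * ennreal (indicator B z * Gi x z * Gi y z)
   \<le> ennreal (2/eps) * (ennreal (indicator B z * ((f x - f z)^2 * j x z)) + ennreal (indicator B z * ((f y - f z)^2 * j y z)))"
proof (cases "z \<in> B \<and> eps \<le> j x z \<and> eps \<le> j y z")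
  case True
  have jx: "j x z \<ge> eps" "j y z \<ge> eps" using True by auto
  have e: "eps > 0" using eps_pos .
  have a: "eps * (f x - f z)^2 \<le> (f x - f z)^2 * j x z"
    using jx by (simp add: mult.commute[of _ "j x z"] mult_right_mono)
  have c: "eps * (f y - f z)^2 \<le> (f y - f z)^2 * j y z"
    using jx by (simp add: mult.commute[of _ "j y z"] mult_right_mono)
  have "(f x - f y)^2 \<le> 2 * (f x - f z)^2 + 2 * (f y - f z)^2" using sq_tri[of "f x" "f y" "f z"] by simp
  also have "\<dots> = 2 / eps * (eps * (f x - f z)^2 + eps * (f y - f z)^2)"
    using e by (simp add: field_simps)
  also have "\<dots> \<le> 2 / eps * ((f x - f z)^2 * j x z + (f y - f z)^2 * j y z)"
    using a c e by (intro mult_left_mono add_mono) auto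
  finally have re: "(f x - f y)^2 \<le> 2 / eps * ((f x - f z)^2 * j x z + (f y - f z)^2 * j y z)" .
  have n1: "0 \<le> (f x - f z)^2 * j x z" "0 \<le> (f y - f z)^2 * j y z"
    using jx e by auto
  have "ennreal ((f x - f y)^2) * ennreal (indicator B z * Gi x z * Gi y z) = ennreal ((f x - f y)^2)"
    using True by simp
  also have "\<dots> \<le> ennreal (2 / eps * ((f x - f z)^2 * j x z + (f y - f z)^2 * j y z))"
    using re by (rule ennreal_leI)
  also have "\<dots> = ennreal (2/eps) * (ennreal ((f x - f z)^2 * j x z) + ennreal ((f y - f z)^2 * j y z))"
  proof -
    have "ennreal (2 / eps * ((f x - f z)^2 * j x z + (f y - f z)^2 * j y z))
        = ennreal (2 / eps) * ennreal ((f x - f z)^2 * j x z + (f y - f z)^2 * j y z)"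
      using n1 e by (intro ennreal_mult) auto
    also have "ennreal ((f x - f z)^2 * j x z + (f y - f z)^2 * j y z)
        = ennreal ((f x - f z)^2 * j x z) + ennreal ((f y - f z)^2 * j y z)"
      using n1 by (intro ennreal_plus) auto
    finally show ?thesis .
  qed
  finally show ?thesis using True by simp
qed (auto simp: indicator_def)

definition "Af f x = (\<integral>\<^sup>+z. ennreal (indicator B z * ((f x - f z)^2 * j x z)) \<partial>\<mu>)"

lemma pt2:
  assumes x: "x \<in> B" and y: "y \<in> B" and fm[measurable]: "f \<in> borel_measurable \<mu>"
  shows "ennreal ((f x - f y)^2) * m \<le> ennreal (4/eps) * (Af f x + Af f y)"
proof -
  define X where "X = (\<integral>\<^sup>+z. ennreal (indicator B z * Gi x z * Gi y z) \<partial>\<mu>)"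
  have "ennreal ((f x - f y)^2) * m \<le> ennreal ((f x - f y)^2) * (2 * X)"
    using cover[OF x y] unfolding X_def by (intro mult_left_mono) auto
  also have "\<dots> = 2 * (ennreal ((f x - f y)^2) * X)" by (rule mult.left_commute)
  also have "\<dots> = 2 * (\<integral>\<^sup>+z. ennreal ((f x - f y)^2) * ennreal (indicator B z * Gi x z * Gi y z) \<partial>\<mu>)"
    unfolding X_def by (rule arg_cong[where f="\<lambda>u. 2 * u"], rule nn_integral_cmult[symmetric]) measurable
  also have "\<dots> \<le> 2 * (\<integral>\<^sup>+z. ennreal (2/eps) * (ennreal (indicator B z * ((f x - f z)^2 * j x z))
      + ennreal (indicator B z * ((f y - f z)^2 * j y z))) \<partial>\<mu>)"
    by (intro mult_left_mono nn_integral_mono pt3) auto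
  also have "\<dots> = 2 * (ennreal (2/eps) * (Af f x + Af f y))"
    unfolding Af_def by (subst nn_integral_cmult, measurable, subst nn_integral_add, measurable)
  also have "\<dots> = ennreal (4/eps) * (Af f x + Af f y)"
  proof -
    have "ennreal (4/eps) = ennreal 2 * ennreal (2/eps)"
      using ennreal_mult[of 2 "2/eps"] eps_pos by simp
    then show ?thesis by (simp add: mult.assoc)
  qed
  finally show ?thesis .
qed

lemma Af_le:
  "(\<integral>\<^sup>+x. Af f x \<partial>\<mu>) \<le> (\<integral>\<^sup>+x. \<integral>\<^sup>+y. ennreal ((f y - f x)^2 * j x y) \<partial>\<mu> \<partial>\<mu>)"
  unfolding Af_def
proof (intro nn_integral_mono)
  fix x z
  show "ennreal (indicator B z * ((f x - f z)^2 * j x z)) \<le> ennreal ((f z - f x)^2 * j x z)"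
    by (cases "z \<in> B") (auto simp: power2_commute)
qed

lemma Af_meas[measurable]: assumes [measurable]: "f \<in> borel_measurable \<mu>" shows "Af f \<in> borel_measurable \<mu>"
  unfolding Af_def by measurable

lemma LP_f:
  assumes fm[measurable]: "f \<in> borel_measurable \<mu>"
  shows "(\<integral>\<^sup>+x. \<integral>\<^sup>+y. ennreal (indicator B x * indicator B y * (f x - f y)^2) \<partial>\<mu> \<partial>\<mu>)
      \<le> ennreal (8/eps) * (\<integral>\<^sup>+x. \<integral>\<^sup>+y. ennreal ((f y - f x)^2 * j x y) \<partial>\<mu> \<partial>\<mu>)"
proof -
  define Q0 where "Q0 = (\<integral>\<^sup>+x. \<integral>\<^sup>+y. ennreal (indicator B x * indicator B y * (f x - f y)^2) \<partial>\<mu> \<partial>\<mu>)"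
  define Df where "Df = (\<integral>\<^sup>+x. \<integral>\<^sup>+y. ennreal ((f y - f x)^2 * j x y) \<partial>\<mu> \<partial>\<mu>)"
  define IA where "IA = (\<integral>\<^sup>+x. Af f x \<partial>\<mu>)"
  define c where "c = ennreal (4/eps)"
  have "m * Q0 = (\<integral>\<^sup>+x. m * (\<integral>\<^sup>+y. ennreal (indicator B x * indicator B y * (f x - f y)^2) \<partial>\<mu>) \<partial>\<mu>)"
    unfolding Q0_def by (rule nn_integral_cmult[symmetric]) measurable
  also have "\<dots> = (\<integral>\<^sup>+x. \<integral>\<^sup>+y. m * ennreal (indicator B x * indicator B y * (f x - f y)^2) \<partial>\<mu> \<partial>\<mu>)"
    by (intro nn_integral_cong nn_integral_cmult[symmetric]) measurable
  also have "\<dots> \<le> (\<integral>\<^sup>+x. \<integral>\<^sup>+y. c * (ennreal (indicator B y) * Af f x) + c * (ennreal (indicator B x) * Af f y) \<partial>\<mu> \<partial>\<mu>)"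
  proof (intro nn_integral_mono)
    fix x y
    show "m * ennreal (indicator B x * indicator B y * (f x - f y)^2)
        \<le> c * (ennreal (indicator B y) * Af f x) + c * (ennreal (indicator B x) * Af f y)"
    proof (cases "x \<in> B \<and> y \<in> B")
      case True
      then have "m * ennreal (indicator B x * indicator B y * (f x - f y)^2) = ennreal ((f x - f y)^2) * m"
        by (simp add: mult.commute)
      also have "\<dots> \<le> c * (Af f x + Af f y)" unfolding c_def using True by (intro pt2) auto
      also have "\<dots> = c * (ennreal (indicator B y) * Af f x) + c * (ennreal (indicator B x) * Af f y)"
        using True by (simp add: distrib_left)
      finally show ?thesis .
    qed auto
  qed
  also have "\<dots> = (\<integral>\<^sup>+x. \<integral>\<^sup>+y. c * (ennreal (indicator B y) * Af f x) \<partial>\<mu> \<partial>\<mu>)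
      + (\<integral>\<^sup>+x. \<integral>\<^sup>+y. c * (ennreal (indicator B x) * Af f y) \<partial>\<mu> \<partial>\<mu>)"
    by (rule dbl_add) measurable
  also have "(\<integral>\<^sup>+x. \<integral>\<^sup>+y. c * (ennreal (indicator B y) * Af f x) \<partial>\<mu> \<partial>\<mu>) = (\<integral>\<^sup>+x. (c * Af f x) * m \<partial>\<mu>)"
  proof (intro nn_integral_cong)
    fix x
    have "(\<integral>\<^sup>+y. c * (ennreal (indicator B y) * Af f x) \<partial>\<mu>) = (\<integral>\<^sup>+y. (c * Af f x) * indicator B y \<partial>\<mu>)"
      by (intro nn_integral_cong) (simp add: mult_ac ennreal_indicator)
    also have "\<dots> = (c * Af f x) * m" by (rule nn_integral_cmult_indicator) simp
    finally show "(\<integral>\<^sup>+y. c * (ennreal (indicator B y) * Af f x) \<partial>\<mu>) = (c * Af f x) * m" .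
  qed
  also have "\<dots> = c * IA * m"
    unfolding IA_def by (subst nn_integral_multc, measurable, subst nn_integral_cmult, measurable)
  also have "(\<integral>\<^sup>+x. \<integral>\<^sup>+y. c * (ennreal (indicator B x) * Af f y) \<partial>\<mu> \<partial>\<mu>) = (\<integral>\<^sup>+x. (c * IA) * indicator B x \<partial>\<mu>)"
  proof (intro nn_integral_cong)
    fix x
    have "(\<integral>\<^sup>+y. c * (ennreal (indicator B x) * Af f y) \<partial>\<mu>) = (\<integral>\<^sup>+y. (c * ennreal (indicator B x)) * Af f y \<partial>\<mu>)"
      by (simp add: mult.assoc)
    also have "\<dots> = (c * ennreal (indicator B x)) * IA" unfolding IA_def by (rule nn_integral_cmult) measurable
    finally show "(\<integral>\<^sup>+y. c * (ennreal (indicator B x) * Af f y) \<partial>\<mu>) = (c * IA) * indicator B x"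
      by (simp add: mult_ac ennreal_indicator)
  qed
  also have "\<dots> = c * IA * m" by (rule nn_integral_cmult_indicator) simp
  finally have "m * Q0 \<le> c * IA * m + c * IA * m" .
  also have "\<dots> = m * (2 * c * IA)" by (simp add: mult_2 mult_ac distrib_left)
  also have "\<dots> \<le> m * (ennreal (8/eps) * Df)"
  proof -
    have "2 * c = ennreal (8/eps)"
      unfolding c_def using ennreal_mult[of 2 "4/eps"] eps_pos by simp
    then show ?thesis using Af_le[of f] unfolding IA_def Df_def
      by (intro mult_left_mono) (auto simp: mult.assoc intro: mult_left_mono)
  qed
  finally show ?thesis unfolding Q0_def Df_def
    using m0 mfin by (simp add: ennreal_mult_le_mult_iff)
qed

end


lemma amgm_real:
  fixes a p q :: real
  assumes "\<forall>t>0. a \<le> t * p + q / t" "p \<ge> 0" "q \<ge> 0" "a \<ge> 0"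
  shows "a^2 \<le> 4 * p * q"
proof (cases "a \<le> 0")
  case True
  then have "a = 0" using assms(4) by simp
  then show ?thesis using assms(2,3) by simp
next
  case False
  then have a: "a > 0" by simp
  show ?thesis
  proof (cases "p = 0")
    case True
    show ?thesis
    proof (cases "q = 0")
      case True
      with \<open>p = 0\<close> assms(1) have "a \<le> 0" by (metis add_0 div_0 mult_zero_right zero_less_one)
      then show ?thesis using a by simp
    next
      case False
      then have q: "q > 0" using assms(3) by simp
      have "a \<le> (2 * q / a) * p + q / (2 * q / a)" using assms(1) q a by (intro assms(1)[rule_format]) simp
      then have "a \<le> a / 2" using \<open>p = 0\<close> q a by (simp add: field_simps)
      then show ?thesis using a by simp
    qed
  next
    case False
    then have p: "p > 0" using assms(2) by simp
    have "a \<le> (a / (2 * p)) * p + q / (a / (2 * p))" using p a by (intro assms(1)[rule_format]) simp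
    then have "a \<le> a / 2 + 2 * p * q / a" using p a by (simp add: field_simps)
    then have "a * a \<le> (a / 2 + 2 * p * q / a) * a" using a by (intro mult_right_mono) auto
    then have "a * a \<le> a * a / 2 + 2 * p * q" using a by (simp add: field_simps)
    then show ?thesis by (simp add: power2_eq_square)
  qed
qed

lemma amgm_pt:
  fixes t w u :: real
  assumes "t > 0" "w > 0"
  shows "\<bar>u\<bar> \<le> t / 2 * (u^2 * w) + 1 / (2 * t) * (1 / w)"
proof -
  define s where "s = t * w"
  have s: "s > 0" using assms unfolding s_def by simp
  have "0 \<le> (s * \<bar>u\<bar> - 1)^2" by simp
  then have "2 * s * \<bar>u\<bar> \<le> s^2 * u^2 + 1" by (simp add: power2_eq_square algebra_simps)
  then have "\<bar>u\<bar> \<le> (s^2 * u^2 + 1) / (2 * s)" using s by (simp add: field_simps)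
  also have "\<dots> = t / 2 * (u^2 * w) + 1 / (2 * t) * (1 / w)"
    using assms unfolding s_def by (simp add: field_simps power2_eq_square)
  finally show ?thesis .
qed

context setting begin

lemma fz_bound:
  assumes fm[measurable]: "f \<in> borel_measurable \<mu>" and fb: "\<forall>x. \<bar>f x\<bar> \<le> F"
    and f0: "(\<integral>x. f x \<partial>\<mu>) = 0"
    and Efin: "(\<integral>\<^sup>+x. ennreal ((f x - f z)^2 * h x / \<phi> x) \<partial>\<mu>) < \<infinity>"
  shows "ennreal ((f z)^2) \<le> (\<integral>\<^sup>+x. ennreal ((f x - f z)^2 * h x / \<phi> x) \<partial>\<mu>) * (\<integral>\<^sup>+x. ennreal (\<phi> x / h x) \<partial>\<mu>)"
proof -
  define Ez where "Ez = (\<integral>\<^sup>+x. ennreal ((f x - f z)^2 * h x / \<phi> x) \<partial>\<mu>)"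
  define Y where "Y = (\<integral>\<^sup>+x. ennreal (\<phi> x / h x) \<partial>\<mu>)"
  define ez where "ez = enn2real Ez"
  define y where "y = enn2real Y"
  have Ez_eq: "Ez = ennreal ez" unfolding ez_def Ez_def using Efin by simp
  have Y_eq: "Y = ennreal y" unfolding y_def Y_def using phi_h_int by simp
  have ez0: "ez \<ge> 0" "y \<ge> 0" unfolding ez_def y_def by auto
  interpret P: prob_space \<mu> by (rule prob)
  have int_u: "integrable \<mu> (\<lambda>x. f x - f z)"
  proof (rule P.integrable_const_bound[where B="2 * F"])
    show "AE x in \<mu>. norm (f x - f z) \<le> 2 * F"
      using fb by (intro AE_I2) (smt (verit) real_norm_def)
  qed measurable
  have int_f: "integrable \<mu> f"
    using fb by (intro P.integrable_const_bound[where B=F]) auto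
  have "(\<integral>x. f x - f z \<partial>\<mu>) = - f z"
    using f0 int_f P.prob_space by (simp add: Bochner_Integration.integral_diff)
  then have "ennreal \<bar>f z\<bar> \<le> (\<integral>\<^sup>+x. norm (f x - f z) \<partial>\<mu>)"
    using integral_norm_bound_ennreal[OF int_u] by simp
  then have bnd0: "ennreal \<bar>f z\<bar> \<le> (\<integral>\<^sup>+x. ennreal \<bar>f x - f z\<bar> \<partial>\<mu>)" by simp
  have tb: "\<bar>f z\<bar> \<le> t * (ez / 2) + (y / 2) / t" if t: "t > 0" for t
  proof -
    have "(\<integral>\<^sup>+x. ennreal \<bar>f x - f z\<bar> \<partial>\<mu>)
        \<le> (\<integral>\<^sup>+x. ennreal (t / 2) * ennreal ((f x - f z)^2 * h x / \<phi> x) + ennreal (1 / (2 * t)) * ennreal (\<phi> x / h x) \<partial>\<mu>)"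
    proof (intro nn_integral_mono)
      fix x
      have w: "h x / \<phi> x > 0" using h_pos phi_ge by (metis divide_pos_pos less_le_trans zero_less_one)
      have hp: "h x > 0" "\<phi> x > 0" using h_pos phi_ge by (auto intro: less_le_trans[OF zero_less_one])
      have "\<bar>f x - f z\<bar> \<le> t / 2 * ((f x - f z)^2 * (h x / \<phi> x)) + 1 / (2 * t) * (1 / (h x / \<phi> x))"
        by (rule amgm_pt[OF t w])
      also have "\<dots> = t / 2 * ((f x - f z)^2 * h x / \<phi> x) + 1 / (2 * t) * (\<phi> x / h x)"
        by simp
      finally have re: "\<bar>f x - f z\<bar> \<le> t / 2 * ((f x - f z)^2 * h x / \<phi> x) + 1 / (2 * t) * (\<phi> x / h x)" .
      have n: "0 \<le> t / 2 * ((f x - f z)^2 * h x / \<phi> x)" "0 \<le> 1 / (2 * t) * (\<phi> x / h x)"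
        using t hp by auto
      have "ennreal \<bar>f x - f z\<bar> \<le> ennreal (t / 2 * ((f x - f z)^2 * h x / \<phi> x) + 1 / (2 * t) * (\<phi> x / h x))"
        using re by (rule ennreal_leI)
      also have "\<dots> = ennreal (t / 2) * ennreal ((f x - f z)^2 * h x / \<phi> x) + ennreal (1 / (2 * t)) * ennreal (\<phi> x / h x)"
      proof -
        have c: "0 \<le> t / 2" "0 \<le> 1 / (2 * t)" using t by auto
        show ?thesis by (simp only: ennreal_plus[OF n] ennreal_mult'[OF c(1)] ennreal_mult'[OF c(2)])
      qed
      finally show "ennreal \<bar>f x - f z\<bar> \<le> ennreal (t / 2) * ennreal ((f x - f z)^2 * h x / \<phi> x) + ennreal (1 / (2 * t)) * ennreal (\<phi> x / h x)" .
    qed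
    also have "\<dots> = ennreal (t / 2) * Ez + ennreal (1 / (2 * t)) * Y"
    proof -
      have "(\<integral>\<^sup>+x. ennreal (t / 2) * ennreal ((f x - f z)^2 * h x / \<phi> x) + ennreal (1 / (2 * t)) * ennreal (\<phi> x / h x) \<partial>\<mu>)
         = (\<integral>\<^sup>+x. ennreal (t / 2) * ennreal ((f x - f z)^2 * h x / \<phi> x) \<partial>\<mu>) + (\<integral>\<^sup>+x. ennreal (1 / (2 * t)) * ennreal (\<phi> x / h x) \<partial>\<mu>)"
        by (rule nn_integral_add) measurable
      also have "(\<integral>\<^sup>+x. ennreal (t / 2) * ennreal ((f x - f z)^2 * h x / \<phi> x) \<partial>\<mu>) = ennreal (t / 2) * Ez"
        unfolding Ez_def by (rule nn_integral_cmult) measurable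
      also have "(\<integral>\<^sup>+x. ennreal (1 / (2 * t)) * ennreal (\<phi> x / h x) \<partial>\<mu>) = ennreal (1 / (2 * t)) * Y"
        unfolding Y_def by (rule nn_integral_cmult) measurable
      finally show ?thesis .
    qed
    also have "\<dots> = ennreal (t * (ez / 2) + (y / 2) / t)"
    proof -
      have c: "0 \<le> t / 2" "0 \<le> 1 / (2 * t)" using t by auto
      have "ennreal (t / 2) * ennreal ez + ennreal (1 / (2 * t)) * ennreal y = ennreal (t / 2 * ez + 1 / (2 * t) * y)"
        using c ez0 by (simp only: ennreal_plus[symmetric] ennreal_mult[symmetric] mult_nonneg_nonneg)
      also have "t / 2 * ez + 1 / (2 * t) * y = t * (ez / 2) + (y / 2) / t" by simp
      finally show ?thesis unfolding Ez_eq Y_eq .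
    qed
    finally have "ennreal \<bar>f z\<bar> \<le> ennreal (t * (ez / 2) + (y / 2) / t)" using bnd0 by (rule order_trans[rotated])
    moreover have nn: "0 \<le> t * (ez / 2) + (y / 2) / t" using t ez0 by auto
    ultimately show ?thesis by (simp only: ennreal_le_iff[OF nn])
  qed
  have "(f z)^2 = \<bar>f z\<bar>^2" by simp
  also have "\<dots> \<le> 4 * (ez / 2) * (y / 2)"
    using tb ez0 by (intro amgm_real) auto
  also have "\<dots> = ez * y" by simp
  finally have "(f z)^2 \<le> ez * y" .
  then have "ennreal ((f z)^2) \<le> ennreal (ez * y)" by (rule ennreal_leI)
  also have "\<dots> = Ez * Y" unfolding Ez_eq Y_eq using ez0 by (simp add: ennreal_mult)
  finally show ?thesis unfolding Ez_def Y_def .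
qed

end


lemma sq_tri': "((u::real) - v)^2 \<le> 2 * (u - w)^2 + 2 * (v - w)^2"
proof -
  have "0 \<le> ((u - w) + (v - w))^2" by simp
  then show ?thesis by (simp add: power2_eq_square algebra_simps)
qed

context setting begin

abbreviation "W1 \<equiv> (\<integral>\<^sup>+x. ennreal (h x / \<phi> x) \<partial>\<mu>)"
abbreviation "Yv \<equiv> (\<integral>\<^sup>+x. ennreal (\<phi> x / h x) \<partial>\<mu>)"

lemma W1_fin: "W1 < \<infinity>"
proof -
  have L: "2 * (\<integral>\<^sup>+x. ennreal (((\<lambda>x. 1::real) x) ^ 2 * h x / \<phi> x) \<partial>\<mu>)
    \<le> (\<integral>\<^sup>+x. \<integral>\<^sup>+y. ennreal (((\<lambda>x. 1::real) y - (\<lambda>x. 1) x)^2 * j x y) \<partial>\<mu> \<partial>\<mu>)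
      + 2 * (ennreal b * (\<integral>\<^sup>+x. ennreal (indicator (ball 0 r0) x * ((\<lambda>x. 1::real) x) ^ 2) \<partial>\<mu>))"
    by (rule L1[where G=1]) auto
  have e: "(\<integral>\<^sup>+x. ennreal (indicator (ball 0 r0) x * ((\<lambda>x. 1::real) x) ^ 2) \<partial>\<mu>) = emeasure \<mu> (ball 0 r0)"
    by (simp add: ennreal_indicator)
  from L have "2 * W1 \<le> 2 * (ennreal b * emeasure \<mu> (ball 0 r0))" unfolding e by simp
  also have "\<dots> < \<infinity>" using ball_fin by (simp add: ennreal_mult_less_top)
  finally show ?thesis by (auto simp: ennreal_mult_less_top)
qed

lemma step_z:
  assumes fm[measurable]: "f \<in> borel_measurable \<mu>" and fb: "\<forall>x. \<bar>f x\<bar> \<le> F"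
    and f0: "(\<integral>x. f x \<partial>\<mu>) = 0"
    and Dfin: "(\<integral>\<^sup>+x. \<integral>\<^sup>+y. ennreal ((f y - f x)^2 * j x y) \<partial>\<mu> \<partial>\<mu>) < \<infinity>"
    and rr: "r0 \<le> r"
  shows "2 * (\<integral>\<^sup>+ x. ennreal ((f x)\<^sup>2 * h x / \<phi> x) \<partial>\<mu>)
    \<le> (2 + 2 * (Yv * W1)) * ((\<integral>\<^sup>+x. \<integral>\<^sup>+y. ennreal ((f y - f x)^2 * j x y) \<partial>\<mu> \<partial>\<mu>)
         + 2 * (ennreal b * (\<integral>\<^sup>+x. ennreal (indicator (ball 0 r) x * (f x - f z)^2) \<partial>\<mu>)))"
proof -
  define Df where "Df = (\<integral>\<^sup>+x. \<integral>\<^sup>+y. ennreal ((f y - f x)^2 * j x y) \<partial>\<mu> \<partial>\<mu>)"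
  define Ez where "Ez = (\<integral>\<^sup>+x. ennreal ((f x - f z)^2 * h x / \<phi> x) \<partial>\<mu>)"
  define Rz where "Rz = (\<integral>\<^sup>+x. ennreal (indicator (ball 0 r) x * (f x - f z)^2) \<partial>\<mu>)"
  define Fw where "Fw = (\<integral>\<^sup>+ x. ennreal ((f x)\<^sup>2 * h x / \<phi> x) \<partial>\<mu>)"
  have gb: "\<forall>x. \<bar>f x - f z\<bar> \<le> 2 * F"
  proof
    fix x
    show "\<bar>f x - f z\<bar> \<le> 2 * F" using fb[rule_format, of x] fb[rule_format, of z] unfolding abs_le_iff by linarith
  qed
  have L: "2 * (\<integral>\<^sup>+x. ennreal ((f x - f z) ^ 2 * h x / \<phi> x) \<partial>\<mu>)
    \<le> (\<integral>\<^sup>+x. \<integral>\<^sup>+y. ennreal (((f y - f z) - (f x - f z))^2 * j x y) \<partial>\<mu> \<partial>\<mu>)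
      + 2 * (ennreal b * (\<integral>\<^sup>+x. ennreal (indicator (ball 0 r0) x * (f x - f z) ^ 2) \<partial>\<mu>))"
    by (rule L1[OF _ gb]) measurable
  have R0: "(\<integral>\<^sup>+x. ennreal (indicator (ball 0 r0) x * (f x - f z) ^ 2) \<partial>\<mu>) \<le> Rz"
    unfolding Rz_def using rr by (intro nn_integral_mono ennreal_leI) (auto simp: indicator_def)
  have E2: "2 * Ez \<le> Df + 2 * (ennreal b * Rz)"
  proof -
    have "2 * Ez \<le> Df + 2 * (ennreal b * (\<integral>\<^sup>+x. ennreal (indicator (ball 0 r0) x * (f x - f z) ^ 2) \<partial>\<mu>))"
      using L unfolding Ez_def Df_def by simp
    also have "\<dots> \<le> Df + 2 * (ennreal b * Rz)"
      using R0 by (intro add_left_mono mult_left_mono) auto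
    finally show ?thesis .
  qed
  have Rfin: "Rz < \<infinity>"
  proof -
    have "Rz \<le> (\<integral>\<^sup>+x. ennreal ((2 * F)^2) \<partial>\<mu>)"
      unfolding Rz_def
    proof (intro nn_integral_mono ennreal_leI)
      fix x
      have "(f x - f z)^2 \<le> (2 * F)^2"
        using gb power_mono[OF _ abs_ge_zero, of _ "2*F" 2] by (metis power2_abs)
      then show "indicator (ball 0 r) x * (f x - f z)^2 \<le> (2 * F)^2" by (auto simp: indicator_def)
    qed
    also have "\<dots> = ennreal ((2 * F)^2)"
      using prob_space.emeasure_space_1[OF prob] by simp
    finally show ?thesis by (rule le_less_trans) simp
  qed
  have Efin: "Ez < \<infinity>"
  proof -
    have "2 * Ez < \<infinity>"
    proof (rule le_less_trans[OF E2])
      show "Df + 2 * (ennreal b * Rz) < \<infinity>"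
        using Dfin Rfin unfolding Df_def by (simp add: ennreal_mult_less_top)
    qed
    then show ?thesis by (auto simp: ennreal_mult_less_top)
  qed
  have fz: "ennreal ((f z)^2) \<le> Ez * Yv"
    unfolding Ez_def by (rule fz_bound[OF fm fb f0]) (use Efin in \<open>simp add: Ez_def\<close>)
  have "Fw \<le> (\<integral>\<^sup>+x. 2 * ennreal ((f x - f z)^2 * h x / \<phi> x) + (2 * ennreal ((f z)^2)) * ennreal (h x / \<phi> x) \<partial>\<mu>)"
    unfolding Fw_def
  proof (intro nn_integral_mono)
    fix x
    have hp: "h x / \<phi> x \<ge> 0" using h_pos phi_ge by (metis divide_nonneg_nonneg less_imp_le order_trans zero_le_one)
    have "(f x)^2 \<le> 2 * (f x - f z)^2 + 2 * (f z)^2"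
      using sq_tri'[of "f x" 0 "f z"] by simp
    then have "(f x)^2 * (h x / \<phi> x) \<le> (2 * (f x - f z)^2 + 2 * (f z)^2) * (h x / \<phi> x)"
      using hp by (rule mult_right_mono)
    then have re: "(f x)\<^sup>2 * h x / \<phi> x \<le> 2 * ((f x - f z)^2 * h x / \<phi> x) + (2 * (f z)^2) * (h x / \<phi> x)"
      by (simp add: algebra_simps)
    have n: "0 \<le> 2 * ((f x - f z)^2 * h x / \<phi> x)" "0 \<le> (2 * (f z)^2) * (h x / \<phi> x)"
      using h_pos[rule_format, of x] phi_ge[rule_format, of x] by auto
    have "ennreal ((f x)\<^sup>2 * h x / \<phi> x) \<le> ennreal (2 * ((f x - f z)^2 * h x / \<phi> x) + (2 * (f z)^2) * (h x / \<phi> x))"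
      using re by (rule ennreal_leI)
    also have "\<dots> = 2 * ennreal ((f x - f z)^2 * h x / \<phi> x) + (2 * ennreal ((f z)^2)) * ennreal (h x / \<phi> x)"
    proof -
      have c: "(0::real) \<le> 2" "0 \<le> 2 * (f z)^2" by auto
      show ?thesis by (simp only: ennreal_plus[OF n] ennreal_mult'[OF c(1)] ennreal_mult'[OF c(2)]) simp
    qed
    finally show "ennreal ((f x)\<^sup>2 * h x / \<phi> x) \<le> 2 * ennreal ((f x - f z)^2 * h x / \<phi> x) + (2 * ennreal ((f z)^2)) * ennreal (h x / \<phi> x)" .
  qed
  also have "\<dots> = 2 * Ez + (2 * ennreal ((f z)^2)) * W1"
  proof -
    have "(\<integral>\<^sup>+x. 2 * ennreal ((f x - f z)^2 * h x / \<phi> x) + (2 * ennreal ((f z)^2)) * ennreal (h x / \<phi> x) \<partial>\<mu>)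
       = (\<integral>\<^sup>+x. 2 * ennreal ((f x - f z)^2 * h x / \<phi> x) \<partial>\<mu>) + (\<integral>\<^sup>+x. (2 * ennreal ((f z)^2)) * ennreal (h x / \<phi> x) \<partial>\<mu>)"
      by (rule nn_integral_add) measurable
    also have "(\<integral>\<^sup>+x. 2 * ennreal ((f x - f z)^2 * h x / \<phi> x) \<partial>\<mu>) = 2 * Ez"
      unfolding Ez_def by (rule nn_integral_cmult) measurable
    also have "(\<integral>\<^sup>+x. (2 * ennreal ((f z)^2)) * ennreal (h x / \<phi> x) \<partial>\<mu>) = (2 * ennreal ((f z)^2)) * W1"
      by (rule nn_integral_cmult) measurable
    finally show ?thesis .
  qed
  also have "\<dots> \<le> 2 * Ez + (2 * (Ez * Yv)) * W1"
    using fz by (intro add_left_mono mult_right_mono mult_left_mono) auto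
  also have "\<dots> = (2 + 2 * (Yv * W1)) * Ez" by (simp add: algebra_simps)
  finally have "2 * Fw \<le> 2 * ((2 + 2 * (Yv * W1)) * Ez)" by (intro mult_left_mono) auto
  also have "\<dots> = (2 + 2 * (Yv * W1)) * (2 * Ez)" by (simp add: mult_ac)
  also have "\<dots> \<le> (2 + 2 * (Yv * W1)) * (Df + 2 * (ennreal b * Rz))"
    using E2 by (intro mult_left_mono) auto
  finally show ?thesis unfolding Fw_def Df_def Rz_def .
qed

end


context setting begin

theorem main_thm: "\<exists>C1>0. \<forall>f. smooth_bdd f \<and> (\<integral>x. f x \<partial>muV V) = 0 \<longrightarrow>
           (\<integral>\<^sup>+ x. ennreal ((f x)\<^sup>2 * h x / \<phi> x) \<partial>muV V) \<le> ennreal C1 * Dform V j f"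
proof -
  define r where "r = max 2 r0"
  have r1: "r > 1" "r0 \<le> r" unfolding r_def by auto
  interpret L: lp V j \<phi> h b r0 r by unfold_locales (rule r1(1))
  define A where "A = 2 + 2 * (Yv * W1)"
  have Afin: "A < \<infinity>" unfolding A_def using W1_fin phi_h_int by (simp add: ennreal_mult_less_top)
  define Ar where "Ar = enn2real A"
  have A_eq: "A = ennreal Ar" unfolding Ar_def using Afin by simp
  have "ennreal 2 \<le> A" unfolding A_def by simp
  then have Ar2: "Ar \<ge> 2" unfolding A_eq by (simp add: ennreal_le_iff)
  define C1 where "C1 = Ar * (L.mr + 16 * b / L.eps) / L.mr"
  have C1_pos: "C1 > 0" unfolding C1_def using Ar2 L.mr_pos L.eps_pos b_pos by (intro divide_pos_pos mult_pos_pos add_pos_pos) auto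
  have C1_eq: "C1 * L.mr = Ar * L.mr + Ar * (16 * b / L.eps)"
    unfolding C1_def using L.mr_pos by (simp add: field_simps)
  show ?thesis
  proof (intro exI[of _ C1] conjI allI impI C1_pos)
    fix f :: "'a \<Rightarrow> real"
    assume asm: "smooth_bdd f \<and> (\<integral>x. f x \<partial>muV V) = 0"
    then have fc: "continuous_on UNIV f" "bounded (range f)" using smooth_bdd_cont by auto
    then obtain F where fb: "\<forall>x. \<bar>f x\<bar> \<le> F" unfolding bounded_real by auto
    have fm[measurable]: "f \<in> borel_measurable \<mu>" using fc(1) by (rule cont_meas)
    have f0: "(\<integral>x. f x \<partial>\<mu>) = 0" using asm by simp
    define Df where "Df = (\<integral>\<^sup>+x. \<integral>\<^sup>+y. ennreal ((f y - f x)^2 * j x y) \<partial>\<mu> \<partial>\<mu>)"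
    define Fw where "Fw = (\<integral>\<^sup>+ x. ennreal ((f x)\<^sup>2 * h x / \<phi> x) \<partial>\<mu>)"
    have Dform_eq: "Dform V j f = (1/2) * Df" unfolding Dform_def Df_def by simp
    show "Fw \<le> ennreal C1 * Dform V j f"
    proof (cases "Df = \<infinity>")
      case True
      have "ennreal C1 * Dform V j f = \<infinity>"
        unfolding Dform_eq True using C1_pos by (simp add: ennreal_mult_eq_top_iff)
      then show ?thesis by simp
    next
      case False
      then have Dfin: "Df < \<infinity>" by (simp add: less_top)
      define m where "m = emeasure \<mu> (ball 0 r)"
      have m_eq: "m = ennreal L.mr" unfolding m_def using L.m_eq .
      have sz: "\<And>z. 2 * Fw \<le> A * (Df + 2 * (ennreal b * (\<integral>\<^sup>+x. ennreal (indicator (ball 0 r) x * (f x - f z)^2) \<partial>\<mu>)))"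
        unfolding A_def Fw_def Df_def by (rule step_z[OF fm fb f0 _ r1(2)]) (use Dfin in \<open>simp add: Df_def\<close>)
      have Q: "(\<integral>\<^sup>+z. (\<integral>\<^sup>+x. ennreal (indicator (ball 0 r) x * (f x - f z)^2) \<partial>\<mu>) * indicator (ball 0 r) z \<partial>\<mu>)
          \<le> ennreal (8 / L.eps) * Df"
      proof -
        have "(\<integral>\<^sup>+z. (\<integral>\<^sup>+x. ennreal (indicator (ball 0 r) x * (f x - f z)^2) \<partial>\<mu>) * indicator (ball 0 r) z \<partial>\<mu>)
            = (\<integral>\<^sup>+z. \<integral>\<^sup>+x. ennreal (indicator (ball 0 r) z * indicator (ball 0 r) x * (f z - f x)^2) \<partial>\<mu> \<partial>\<mu>)"
        proof (intro nn_integral_cong)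
          fix z
          have "(\<integral>\<^sup>+x. ennreal (indicator (ball 0 r) x * (f x - f z)^2) \<partial>\<mu>) * indicator (ball 0 r) z
              = (\<integral>\<^sup>+x. ennreal (indicator (ball 0 r) x * (f x - f z)^2) * indicator (ball 0 r) z \<partial>\<mu>)"
            by (rule nn_integral_multc[symmetric]) measurable
          also have "\<dots> = (\<integral>\<^sup>+x. ennreal (indicator (ball 0 r) z * indicator (ball 0 r) x * (f z - f x)^2) \<partial>\<mu>)"
            by (intro nn_integral_cong) (cases "z \<in> ball 0 r"; auto simp: power2_commute)
          finally show "(\<integral>\<^sup>+x. ennreal (indicator (ball 0 r) x * (f x - f z)^2) \<partial>\<mu>) * indicator (ball 0 r) z
              = (\<integral>\<^sup>+x. ennreal (indicator (ball 0 r) z * indicator (ball 0 r) x * (f z - f x)^2) \<partial>\<mu>)" .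
        qed
        also have "\<dots> \<le> ennreal (8 / L.eps) * Df"
          unfolding Df_def by (rule L.LP_f[OF fm])
        finally show ?thesis .
      qed
      have "(2 * Fw) * m = (\<integral>\<^sup>+z. (2 * Fw) * indicator (ball 0 r) z \<partial>\<mu>)"
        unfolding m_def by (rule nn_integral_cmult_indicator[symmetric]) simp
      also have "\<dots> \<le> (\<integral>\<^sup>+z. (A * Df) * indicator (ball 0 r) z
          + (A * (2 * ennreal b)) * ((\<integral>\<^sup>+x. ennreal (indicator (ball 0 r) x * (f x - f z)^2) \<partial>\<mu>) * indicator (ball 0 r) z) \<partial>\<mu>)"
      proof (intro nn_integral_mono)
        fix z
        show "(2 * Fw) * indicator (ball 0 r) z \<le> (A * Df) * indicator (ball 0 r) z
          + (A * (2 * ennreal b)) * ((\<integral>\<^sup>+x. ennreal (indicator (ball 0 r) x * (f x - f z)^2) \<partial>\<mu>) * indicator (ball 0 r) z)"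
          using sz[of z] by (cases "z \<in> ball 0 r") (auto simp: distrib_left mult_ac)
      qed
      also have "\<dots> = (A * Df) * m + (A * (2 * ennreal b)) *
          (\<integral>\<^sup>+z. (\<integral>\<^sup>+x. ennreal (indicator (ball 0 r) x * (f x - f z)^2) \<partial>\<mu>) * indicator (ball 0 r) z \<partial>\<mu>)"
      proof -
        have "(\<integral>\<^sup>+z. (A * Df) * indicator (ball 0 r) z
          + (A * (2 * ennreal b)) * ((\<integral>\<^sup>+x. ennreal (indicator (ball 0 r) x * (f x - f z)^2) \<partial>\<mu>) * indicator (ball 0 r) z) \<partial>\<mu>)
          = (\<integral>\<^sup>+z. (A * Df) * indicator (ball 0 r) z \<partial>\<mu>) + (\<integral>\<^sup>+z. (A * (2 * ennreal b)) * ((\<integral>\<^sup>+x. ennreal (indicator (ball 0 r) x * (f x - f z)^2) \<partial>\<mu>) * indicator (ball 0 r) z) \<partial>\<mu>)"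
          by (rule nn_integral_add) measurable
        also have "(\<integral>\<^sup>+z. (A * Df) * indicator (ball 0 r) z \<partial>\<mu>) = (A * Df) * m"
          unfolding m_def by (rule nn_integral_cmult_indicator) simp
        also have "(\<integral>\<^sup>+z. (A * (2 * ennreal b)) * ((\<integral>\<^sup>+x. ennreal (indicator (ball 0 r) x * (f x - f z)^2) \<partial>\<mu>) * indicator (ball 0 r) z) \<partial>\<mu>)
           = (A * (2 * ennreal b)) * (\<integral>\<^sup>+z. (\<integral>\<^sup>+x. ennreal (indicator (ball 0 r) x * (f x - f z)^2) \<partial>\<mu>) * indicator (ball 0 r) z \<partial>\<mu>)"
          by (rule nn_integral_cmult) measurable
        finally show ?thesis .
      qed
      also have "\<dots> \<le> (A * Df) * m + (A * (2 * ennreal b)) * (ennreal (8 / L.eps) * Df)"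
        using Q by (intro add_left_mono mult_left_mono) auto
      also have "\<dots> = ennreal (C1 * L.mr) * Df"
      proof -
        have c0: "0 \<le> Ar" "0 \<le> L.mr" "0 \<le> 16 * b / L.eps" "0 \<le> Ar * L.mr" "0 \<le> Ar * (16 * b / L.eps)"
          using Ar2 L.mr_pos b_pos L.eps_pos by auto
        have "(A * Df) * m = ennreal (Ar * L.mr) * Df"
          unfolding A_eq m_eq by (simp add: ennreal_mult[OF c0(1,2)] mult_ac)
        moreover have "(A * (2 * ennreal b)) * (ennreal (8 / L.eps) * Df) = ennreal (Ar * (16 * b / L.eps)) * Df"
        proof -
          have re: "Ar * (16 * b / L.eps) = Ar * (2 * (b * (8 / L.eps)))" by simp
          have n: "0 \<le> Ar" "(0::real) \<le> 2" "0 \<le> b" using Ar2 b_pos by auto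
          have "ennreal (Ar * (16 * b / L.eps)) = ennreal Ar * (ennreal 2 * (ennreal b * ennreal (8 / L.eps)))"
            unfolding re by (simp only: ennreal_mult'[OF n(1)] ennreal_mult'[OF n(2)] ennreal_mult'[OF n(3)])
          then show ?thesis unfolding A_eq by (simp add: mult_ac)
        qed
        moreover have "ennreal (Ar * L.mr) * Df + ennreal (Ar * (16 * b / L.eps)) * Df = ennreal (C1 * L.mr) * Df"
          unfolding C1_eq using c0 by (simp add: ennreal_plus distrib_right)
        ultimately show ?thesis by simp
      qed
      also have "\<dots> = (ennreal C1 * Dform V j f) * (2 * m)"
      proof -
        have h2: "(1 / 2 :: ennreal) * 2 = 1"
          using ennreal_times_divide[of 2 1 2] by (simp add: mult.commute)
        have "(ennreal C1 * Dform V j f) * (2 * m) = ennreal C1 * m * Df * ((1/2) * 2)"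
          unfolding Dform_eq by (simp add: mult_ac)
        also have "\<dots> = ennreal (C1 * L.mr) * Df"
          unfolding h2 m_eq using C1_pos L.mr_pos by (simp add: ennreal_mult)
        finally show ?thesis by simp
      qed
      finally have "Fw * (2 * m) \<le> (ennreal C1 * Dform V j f) * (2 * m)" by (simp add: mult_ac)
      moreover have "2 * m \<noteq> 0" "2 * m \<noteq> \<infinity>"
        using L.m0 L.mfin unfolding m_def by (auto simp: ennreal_mult_eq_top_iff)
      ultimately show ?thesis
        by (simp add: mult.commute[of _ "2 * m"] ennreal_mult_le_mult_iff)
    qed
  qed
qed

end

theorem theorem3p4:
  fixes V :: "'a::euclidean_space \<Rightarrow> real" and j :: "'a \<Rightarrow> 'a \<Rightarrow> real"
    and \<phi> h :: "'a \<Rightarrow> real" and b r0 :: real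
  assumes V_meas: "V \<in> borel_measurable borel"
    and V_locbdd: "locbdd_real V"
    and V_int: "integrable lborel (\<lambda>x. exp (- V x))"
    and j_meas: "(\<lambda>(x, y). j x y) \<in> borel_measurable borel"
    and j_nonneg: "\<forall>x y. x \<noteq> y \<longrightarrow> 0 \<le> j x y"
    and j_sym: "\<forall>x y. x \<noteq> y \<longrightarrow> j x y = j y x"
    and I1_L1: "(\<integral>\<^sup>+ x. I1 V j x \<partial>muV V) < \<infinity>"
    and I1_locbdd: "locbdd_ennreal (I1 V j)"
    and I2_locbdd: "locbdd_ennreal (I2 V j)"
    and phi_C: "\<phi> \<in> Chat V j"
    and phi_ge: "\<forall>x. \<phi> x \<ge> 1"
    and h_smooth: "smooth h"
    and h_pos: "\<forall>x. h x > 0"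
    and b_pos: "b > 0" and r0_pos: "r0 > 0"
    and lyap: "\<forall>x. Lhat V j \<phi> x \<le> - h x + b * indicator (ball 0 r0) x"
    and phi_h_int: "(\<integral>\<^sup>+ x. ennreal (\<phi> x / h x) \<partial>muV V) < \<infinity>"
    and kappa_fin: "\<forall>r>1. kappa V j r < \<infinity>"
  shows "\<exists>C1>0. \<forall>f. smooth_bdd f \<and> (\<integral>x. f x \<partial>muV V) = 0 \<longrightarrow>
           (\<integral>\<^sup>+ x. ennreal ((f x)\<^sup>2 * h x / \<phi> x) \<partial>muV V) \<le> ennreal C1 * Dform V j f"
  proof -
  interpret setting V j \<phi> h b r0
    by unfold_locales (use V_meas V_int j_meas j_nonneg j_sym I1_L1 I1_locbdd phi_C phi_ge h_smooth h_pos b_pos r0_pos lyap phi_h_int kappa_fin in auto)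
  show ?thesis by (rule main_thm)
qed

end
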